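(* Let $\mathsf{A}=\{A_1,\ldots,A_\ell\}$ be a finite set of $d \times d$ matrices over $\mathbb{C}$, and suppose that $\mathsf{A}$ contains at most one element with rank greater than or equal to two. Then there exist an integer $n\geq 1$ and indices $i_1,\ldots,i_n \in \{1,\ldots,\ell\}$ such that each element of $\mathsf{A}$ of rank exactly one appears at most once in the sequence $A_{i_1},\ldots,A_{i_n}$, and \[\varrho(\mathsf{A})=\rho(A_{i_1}\cdots A_{i_n})^{1/n}.\]
   Context: For a square matrix $A$, $\rho(A)$ denotes its ordinary spectral radius. For a nonempty bounded set $\mathsf{A}$ of $d\times d$ complex matrices, the joint spectral radius is \[\varrho(\mathsf{A})=\lim_{n \to \infty} \sup\left\{\left\|A_{i_n} \cdots A_{i_1}\right\|^{1/n} \colon A_{i_j} \in \mathsf{A}\right\},\] where $\|\cdot\|$ is any matrix norm (the limit exists and is independent of the norm). *)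

theory Defs
  imports "HOL-Analysis.Analysis"
begin

definition eigenvalues :: "complex^'d^'d \<Rightarrow> complex set" where
  "eigenvalues A = {c. \<exists>v. v \<noteq> 0 \<and> A *v v = c *s v}"

definition spectral_radius :: "complex^'d^'d \<Rightarrow> real" where
  "spectral_radius A = Max (cmod ` eigenvalues A)"

definition prod_list_mat :: "(complex^'d^'d) list \<Rightarrow> complex^'d^'d" where
  "prod_list_mat ms = foldr (\<lambda>M P. M ** P) ms (mat 1)"

text \<open>Joint spectral radius, with the (submultiplicative) Frobenius norm, which is the
  norm of the type complex^'d^'d.\<close>
definition joint_spectral_radius :: "(complex^'d^'d) set \<Rightarrow> real" where
  "joint_spectral_radius S =
     lim (\<lambda>n. Sup {root n (norm (prod_list_mat ms)) | ms. length ms = n \<and> set ms \<subseteq> S})"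

end

theory Submission
  imports Defs "Jordan_Normal_Form.Spectral_Radius"
begin

hide_const (open) Spectral_Radius.spectral_radius
no_notation Matrix.vec_index (infixl "$" 100)

lemma cs_sum:
  fixes a b :: "'n::finite \<Rightarrow> complex"
  shows "cmod (\<Sum>j\<in>UNIV. a j * b j) \<le> L2_set (\<lambda>j. cmod (a j)) UNIV * L2_set (\<lambda>j. cmod (b j)) UNIV"
proof -
  have "cmod (\<Sum>j\<in>UNIV. a j * b j) \<le> (\<Sum>j\<in>UNIV. cmod (a j * b j))" by (rule norm_sum)
  also have "\<dots> = (\<Sum>j\<in>UNIV. \<bar>cmod (a j)\<bar> * \<bar>cmod (b j)\<bar>)" by (simp add: norm_mult)
  also have "\<dots> \<le> L2_set (\<lambda>j. cmod (a j)) UNIV * L2_set (\<lambda>j. cmod (b j)) UNIV"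
    by (rule L2_set_mult_ineq)
  finally show ?thesis .
qed

lemma norm_mv: "norm (M *v x) \<le> norm (M::complex^'n^'m) * norm (x::complex^'n)"
proof -
  have "norm (M *v x) = L2_set (\<lambda>i. cmod ((M *v x)$i)) UNIV" by (simp add: norm_vec_def)
  also have "\<dots> \<le> L2_set (\<lambda>i. norm (M$i) * norm x) UNIV"
  proof (rule L2_set_mono)
    fix i
    have "cmod ((M *v x)$i) = cmod (\<Sum>j\<in>UNIV. M$i$j * x$j)" by (simp add: matrix_vector_mult_def)
    also have "\<dots> \<le> norm (M$i) * norm x" unfolding norm_vec_def by (rule cs_sum)
    finally show "cmod ((M *v x)$i) \<le> norm (M$i) * norm x" .
  qed simp
  also have "\<dots> = norm M * norm x"
    by (simp add: L2_set_left_distrib norm_vec_def)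
  finally show ?thesis .
qed

lemma norm_transpose: "norm (transpose (M::complex^'n^'m)) = norm M"
proof -
  have "norm (transpose M) ^ 2 = (\<Sum>i\<in>UNIV. (\<Sum>j\<in>UNIV. cmod (M$j$i) ^ 2))"
    by (simp add: norm_vec_def L2_set_def transpose_def sum_nonneg)
  also have "\<dots> = (\<Sum>j\<in>UNIV. (\<Sum>i\<in>UNIV. cmod (M$j$i) ^ 2))" by (rule sum.swap)
  also have "\<dots> = norm M ^ 2"
    by (simp add: norm_vec_def L2_set_def sum_nonneg)
  finally show ?thesis by (simp add: power2_eq_iff_nonneg)
qed

lemma row_mm: "((A::complex^_^_) ** B) $ i = transpose B *v (A $ i)"
  unfolding matrix_matrix_mult_def matrix_vector_mult_def transpose_def vec_eq_iff
  by (auto intro!: sum.cong simp: mult.commute)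

lemma norm_mm: "norm ((A::complex^'n^'m) ** (B::complex^'p^'n)) \<le> norm A * norm B"
proof -
  have "norm (A ** B) = L2_set (\<lambda>i. norm ((A ** B)$i)) UNIV" by (simp add: norm_vec_def)
  also have "\<dots> \<le> L2_set (\<lambda>i. norm (A$i) * norm B) UNIV"
  proof (rule L2_set_mono)
    fix i
    show "norm ((A ** B)$i) \<le> norm (A$i) * norm B"
      using norm_mv[of "transpose B" "A$i"] by (simp add: row_mm norm_transpose mult.commute)
  qed simp
  also have "\<dots> = norm A * norm B"
    by (simp add: L2_set_left_distrib norm_vec_def)
  finally show ?thesis .
qed

definition smat :: "complex \<Rightarrow> complex^'n^'m \<Rightarrow> complex^'n^'m" where
  "smat c M = (\<chi> i j. c * M$i$j)"

lemma smat_mm_left: "smat c A ** B = smat c (A ** B)"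
  by (simp add: smat_def matrix_matrix_mult_def vec_eq_iff sum_distrib_left mult.assoc)

lemma smat_mm_right: "A ** smat c B = smat c (A ** B)"
  by (simp add: smat_def matrix_matrix_mult_def vec_eq_iff sum_distrib_left mult.assoc mult.left_commute)

lemma norm_smat: "norm (smat c M) = cmod c * norm M"
proof -
  have r: "norm ((smat c M)$i) = cmod c * norm (M$i)" for i
    by (simp add: smat_def norm_vec_def L2_set_right_distrib norm_mult)
  have "norm (smat c M) = L2_set (\<lambda>i. norm ((smat c M)$i)) UNIV" by (rule norm_vec_def)
  also have "\<dots> = L2_set (\<lambda>i. cmod c * norm (M$i)) UNIV" using r by simp
  also have "\<dots> = cmod c * L2_set (\<lambda>i. norm (M$i)) UNIV" by (simp add: L2_set_right_distrib)
  also have "\<dots> = cmod c * norm M" unfolding norm_vec_def[of M] ..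
  finally show ?thesis .
qed


definition mpow :: "complex^'d^'d \<Rightarrow> nat \<Rightarrow> complex^'d^'d" where
  "mpow B m = prod_list_mat (replicate m B)"

lemma mpow_0[simp]: "mpow B 0 = Finite_Cartesian_Product.mat 1"
  by (simp add: mpow_def prod_list_mat_def)

lemma mpow_Suc: "mpow B (Suc m) = B ** mpow B m"
  by (simp add: mpow_def prod_list_mat_def)

lemma mpow_Suc': "mpow B (Suc m) = mpow B m ** B"
proof (induction m)
  case 0 then show ?case by (simp add: mpow_Suc)
next
  case (Suc m)
  have "mpow B (Suc (Suc m)) = B ** (mpow B m ** B)" using Suc by (simp add: mpow_Suc)
  also have "\<dots> = mpow B (Suc m) ** B" by (simp add: mpow_Suc matrix_mul_assoc)
  finally show ?case .
qed

definition enum_d :: "nat \<Rightarrow> 'd::finite" where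
  "enum_d = (SOME f. bij_betw f {0..<CARD('d)} (UNIV::'d set))"

lemma bij_enum: "bij_betw (enum_d :: nat \<Rightarrow> 'd::finite) {0..<CARD('d)} UNIV"
proof -
  have "\<exists>f. bij_betw f {0..<CARD('d)} (UNIV::'d set)"
    using ex_bij_betw_nat_finite[of "UNIV::'d set"] by simp
  then show ?thesis unfolding enum_d_def by (rule someI_ex)
qed

definition idx :: "'d::finite \<Rightarrow> nat" where
  "idx = inv_into {0..<CARD('d)} enum_d"

lemma idx_lt: "idx (x::'d::finite) < CARD('d)"
  using bij_enum[where 'd='d] unfolding idx_def
  by (metis atLeastLessThan_iff bij_betw_def inv_into_into UNIV_I)

lemma enum_idx[simp]: "enum_d (idx (x::'d::finite)) = x"
  using bij_enum[where 'd='d] unfolding idx_def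
  by (simp add: bij_betw_def f_inv_into_f)

lemma idx_enum[simp]: "i < CARD('d::finite) \<Longrightarrow> idx (enum_d i :: 'd) = i"
  using bij_enum[where 'd='d] unfolding idx_def
  by (simp add: bij_betw_def inv_into_f_f)

lemma sum_enum: "(\<Sum>k\<in>{0..<CARD('d::finite)}. g (enum_d k :: 'd)) = sum g UNIV"
  by (rule sum.reindex_bij_betw[OF bij_enum])

lemma sum_enum': "sum g UNIV = (\<Sum>k\<in>{0..<CARD('d::finite)}. g (enum_d k :: 'd))"
  by (rule sum_enum[symmetric])

definition to_m :: "complex^'d^'d \<Rightarrow> complex mat" where
  "to_m A = Matrix.mat CARD('d) CARD('d) (\<lambda>(i,j). A $ enum_d i $ enum_d j)"

definition to_v :: "complex^'d \<Rightarrow> complex Matrix.vec" where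
  "to_v x = Matrix.vec CARD('d) (\<lambda>i. x $ enum_d i)"

definition of_v :: "complex Matrix.vec \<Rightarrow> complex^'d" where
  "of_v v = (\<chi> j. vec_index v (idx j))"

lemma dim_to_m[simp]: "dim_row (to_m (A::complex^'d^'d)) = CARD('d)" "dim_col (to_m A) = CARD('d)"
  by (auto simp: to_m_def)

lemma to_m_carrier: "to_m (A::complex^'d^'d) \<in> carrier_mat CARD('d) CARD('d)"
  by (simp add: to_m_def)

lemma to_m_mult: "to_m ((A::complex^'d^'d) ** B) = to_m A * to_m B"
  by (rule eq_matI) (auto simp: to_m_def matrix_matrix_mult_def scalar_prod_def row_def col_def intro!: sum_enum')

lemma to_m_one: "to_m (Finite_Cartesian_Product.mat 1 :: complex^'d^'d) = 1\<^sub>m CARD('d)"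
proof (rule eq_matI)
  fix i j assume "i < dim_row (1\<^sub>m CARD('d))" "j < dim_col (1\<^sub>m CARD('d))"
  then have ij: "i < CARD('d)" "j < CARD('d)" by auto
  have "(enum_d i :: 'd) = enum_d j \<longleftrightarrow> i = j" using ij
    by (metis idx_enum)
  then show "to_m (Finite_Cartesian_Product.mat 1 :: complex^'d^'d) $$ (i, j) = 1\<^sub>m CARD('d) $$ (i, j)"
    using ij by (simp add: to_m_def Finite_Cartesian_Product.mat_def)
qed (auto simp: to_m_def)

lemma to_m_mpow: "to_m (mpow (B::complex^'d^'d) m) = to_m B ^\<^sub>m m"
proof (induction m)
  case 0 then show ?case by (simp add: to_m_one)
next
  case (Suc m) then show ?case by (simp add: mpow_Suc' to_m_mult)
qed

lemma to_v_mult: "to_v ((A::complex^'d^'d) *v x) = to_m A *\<^sub>v to_v x"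
  by (rule eq_vecI) (auto simp: to_m_def to_v_def matrix_vector_mult_def scalar_prod_def row_def intro!: sum_enum')

lemma to_v_inj: "to_v (x::complex^'d) = to_v y \<Longrightarrow> x = y"
proof -
  assume h: "to_v x = to_v y"
  have "x $ j = y $ j" for j
  proof -
    have "vec_index (to_v x) (idx j) = vec_index (to_v y) (idx j)" using h by simp
    then show ?thesis using idx_lt[of j] by (simp add: to_v_def)
  qed
  then show ?thesis by (simp add: Finite_Cartesian_Product.vec_eq_iff)
qed

lemma to_v_of_v: "v \<in> carrier_vec CARD('d) \<Longrightarrow> to_v (of_v v :: complex^'d) = v"
  by (rule eq_vecI) (auto simp: to_v_def of_v_def)

lemma to_v_zero: "to_v (0::complex^'d) = 0\<^sub>v CARD('d)"
  by (rule eq_vecI) (auto simp: to_v_def)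

lemma to_v_smult: "to_v (c *s (x::complex^'d)) = c \<cdot>\<^sub>v to_v x"
  by (rule eq_vecI) (auto simp: to_v_def)

lemma to_v_carrier: "to_v (x::complex^'d) \<in> carrier_vec CARD('d)"
  by (simp add: to_v_def)

lemma eigenvalues_spectrum: "eigenvalues (A::complex^'d^'d) = spectrum (to_m A)"
  apply (rule Set.set_eqI)
  apply (rule iffI)
proof -
  fix c assume "c \<in> eigenvalues A"
  then obtain v where v: "v \<noteq> 0" "A *v v = c *s v" by (auto simp: eigenvalues_def)
  have "to_v v \<noteq> 0\<^sub>v CARD('d)" using v(1) to_v_inj to_v_zero by metis
  moreover have "to_m A *\<^sub>v to_v v = c \<cdot>\<^sub>v to_v v" using v(2) by (metis to_v_mult to_v_smult)
  ultimately show "c \<in> spectrum (to_m A)"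
    unfolding spectrum_def eigenvalue_def eigenvector_def
    using to_v_carrier[of v] by (auto simp: to_m_def)
next
  fix c assume "c \<in> spectrum (to_m A)"
  then obtain w where w: "w \<in> carrier_vec CARD('d)" "w \<noteq> 0\<^sub>v CARD('d)" "to_m A *\<^sub>v w = c \<cdot>\<^sub>v w"
    unfolding spectrum_def eigenvalue_def eigenvector_def by (auto simp: to_m_def)
  define v where "v = (of_v w :: complex^'d)"
  have tv: "to_v v = w" using w(1) by (simp add: v_def to_v_of_v)
  have "v \<noteq> 0" using tv w(2) to_v_zero by metis
  moreover have "to_v (A *v v) = to_v (c *s v)" using w(3) tv by (simp add: to_v_mult to_v_smult)
  then have "A *v v = c *s v" by (rule to_v_inj)
  ultimately show "c \<in> eigenvalues A" by (auto simp: eigenvalues_def)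
qed

lemma eigenvalues_finite: "finite (eigenvalues (A::complex^'d^'d))"
  using card_finite_spectrum(1)[OF to_m_carrier] by (simp add: eigenvalues_spectrum)

lemma eigenvalues_nonempty: "eigenvalues (A::complex^'d^'d) \<noteq> {}"
  using spectrum_non_empty[OF to_m_carrier] by (simp add: eigenvalues_spectrum)

lemma spectral_radius_ge: fixes A :: "complex^'d^'d" shows "c \<in> eigenvalues A \<Longrightarrow> cmod c \<le> spectral_radius A"
  unfolding Defs.spectral_radius_def using eigenvalues_finite by (intro Max_ge) auto

lemma spectral_radius_mem: fixes A :: "complex^'d^'d" shows "\<exists>c\<in>eigenvalues A. cmod c = spectral_radius A"
proof -
  have "Max (cmod ` eigenvalues A) \<in> cmod ` eigenvalues A"
    using eigenvalues_finite eigenvalues_nonempty by (intro Max_in) auto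
  then show ?thesis unfolding Defs.spectral_radius_def by auto
qed

lemma spectral_radius_nonneg: fixes A :: "complex^'d^'d" shows "0 \<le> spectral_radius A"
  using spectral_radius_mem[of A] norm_ge_zero by metis

lemma smat_mv: "smat c A *v v = c *s (A *v v)"
  by (simp add: smat_def matrix_vector_mult_def Finite_Cartesian_Product.vec_eq_iff sum_distrib_left mult.assoc)

lemma smat_smat: "smat a (smat b X) = smat (a * b) X"
  by (simp add: smat_def Finite_Cartesian_Product.vec_eq_iff mult.assoc)

lemma smat_one[simp]: "smat 1 X = X"
  by (simp add: smat_def Finite_Cartesian_Product.vec_eq_iff)

lemma mpow_smat: fixes A :: "complex^'d^'d" shows "mpow (smat c A) m = smat (c ^ m) (mpow A m)"
proof (induction m)
  case 0
  have "smat 1 (Finite_Cartesian_Product.mat 1 :: complex^'d^'d) = Finite_Cartesian_Product.mat 1"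
    by (simp add: smat_def Finite_Cartesian_Product.vec_eq_iff Finite_Cartesian_Product.mat_def)
  then show ?case by simp
next
  case (Suc m) then show ?case
    by (simp add: mpow_Suc smat_mm_left smat_mm_right) (simp add: smat_def Finite_Cartesian_Product.vec_eq_iff mult.assoc)
qed

lemma norm_le_entries:
  assumes "\<And>i j. cmod (M$i$j) \<le> c"
  shows "norm (M::complex^'d^'d) \<le> of_nat (CARD('d) * CARD('d)) * c"
proof -
  have "norm M \<le> (\<Sum>i\<in>UNIV. norm (M$i))" unfolding norm_vec_def[of M] by (rule L2_set_le_sum) simp
  also have "\<dots> \<le> (\<Sum>i\<in>(UNIV::'d set). (\<Sum>j\<in>(UNIV::'d set). c))"
  proof (rule sum_mono)
    fix i
    show "norm (M$i) \<le> (\<Sum>j\<in>(UNIV::'d set). c)"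
    proof -
      have "norm (M$i) \<le> (\<Sum>j\<in>UNIV. cmod (M$i$j))"
        unfolding norm_vec_def[of "M$i"] by (rule L2_set_le_sum) simp
      also have "\<dots> \<le> (\<Sum>j\<in>(UNIV::'d set). c)" by (rule sum_mono) (rule assms)
      finally show ?thesis .
    qed
  qed
  also have "\<dots> = of_nat (CARD('d) * CARD('d)) * c" by simp
  finally show ?thesis .
qed

lemma gelfand_bound:
  assumes "spectral_radius (B::complex^'d^'d) < \<mu>"
  shows "\<exists>C. \<forall>m. norm (mpow B m) \<le> C * \<mu> ^ m"
proof -
  have mu: "\<mu> > 0" using assms spectral_radius_nonneg[of B] by linarith
  define B' where "B' = smat (complex_of_real (1/\<mu>)) B"
  have ev: "cmod e < 1" if "e \<in> eigenvalues B'" for e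
  proof -
    from that obtain v where v: "v \<noteq> 0" "B' *v v = e *s v" unfolding eigenvalues_def by blast
    have "B *v v = (complex_of_real \<mu> * e) *s v"
    proof -
      have "B *v v = smat (complex_of_real \<mu>) B' *v v"
        using mu by (simp add: B'_def smat_def Finite_Cartesian_Product.vec_eq_iff)
      also have "\<dots> = (complex_of_real \<mu> * e) *s v" by (simp add: smat_mv v(2))
      finally show ?thesis .
    qed
    then have "complex_of_real \<mu> * e \<in> eigenvalues B" using v(1) by (auto simp: eigenvalues_def)
    then have "cmod (complex_of_real \<mu> * e) \<le> spectral_radius B" by (rule spectral_radius_ge)
    then have "\<mu> * cmod e \<le> spectral_radius B" using mu by (simp add: norm_mult abs_of_pos)
    then have "\<mu> * cmod e < \<mu> * 1" using assms by linarith
    then show ?thesis using mu by (simp only: mult_less_cancel_left_pos)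
  qed
  have "Spectral_Radius.spectral_radius (to_m B') < 1"
    unfolding Spectral_Radius.spectral_radius_def eigenvalues_spectrum[symmetric]
    using eigenvalues_finite[of B'] eigenvalues_nonempty[of B'] ev
    by (subst Max_less_iff) auto
  from spectral_radius_jnf_norm_bound_less_1_upper_triangular[OF to_m_carrier this]
  obtain c where c: "\<And>k. norm_bound (to_m B' ^\<^sub>m k) c" by auto
  have ent: "cmod (mpow B' k $ i $ j) \<le> c" for k i j
  proof -
    have "\<forall>i<CARD('d). \<forall>j<CARD('d). cmod (mpow B' k $ enum_d i $ enum_d j) \<le> c"
      using c[of k] unfolding norm_bound_def to_m_mpow[symmetric]
      by (auto simp: to_m_def)
    then show ?thesis using idx_lt[of i] idx_lt[of j] by (metis enum_idx)
  qed
  have "norm (mpow B m) \<le> (of_nat (CARD('d) * CARD('d)) * c) * \<mu> ^ m" for m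
  proof -
    have e1: "mpow B' m = smat (complex_of_real (1/\<mu>) ^ m) (mpow B m)"
      unfolding B'_def by (rule mpow_smat)
    have e2: "complex_of_real (\<mu> ^ m) * complex_of_real (1/\<mu>) ^ m = 1"
      using mu by (simp add: power_one_over flip: of_real_power of_real_mult)
    have "mpow B m = smat (complex_of_real (\<mu> ^ m)) (mpow B' m)"
      unfolding e1 smat_smat e2 by simp
    then have "norm (mpow B m) = \<mu> ^ m * norm (mpow B' m)" using mu by (simp add: norm_smat norm_power abs_of_pos)
    also have "\<dots> \<le> \<mu> ^ m * (of_nat (CARD('d) * CARD('d)) * c)"
      using mu norm_le_entries[of "mpow B' m" c] ent by (intro mult_left_mono) auto
    finally show ?thesis by (simp add: mult.commute)
  qed
  then show ?thesis by blast
qed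

lemma prod_nil[simp]: "prod_list_mat [] = Finite_Cartesian_Product.mat 1"
  by (simp add: prod_list_mat_def)

lemma prod_cons[simp]: "prod_list_mat (A # ms) = A ** prod_list_mat ms"
  by (simp add: prod_list_mat_def)

lemma prod_append: "prod_list_mat (xs @ ys) = prod_list_mat xs ** prod_list_mat ys"
  by (induction xs) (simp_all add: matrix_mul_assoc)

lemma prod_concat_replicate: "prod_list_mat (concat (replicate j w)) = mpow (prod_list_mat w) j"
  by (induction j) (simp_all add: prod_append mpow_Suc)

lemma prod_zero: "(0::complex^'d^'d) \<in> set w \<Longrightarrow> prod_list_mat w = 0"
  by (induction w) auto

lemma rows_eq: "Finite_Cartesian_Product.rows (A::'a::field^'n^'m) = range (\<lambda>i. A $ i)"
  by (auto simp: Finite_Cartesian_Product.rows_def Finite_Cartesian_Product.row_def)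

lemma rank0: "rank (A::complex^'d^'d) = 0 \<Longrightarrow> A = 0"
proof -
  assume "rank A = 0"
  then have h: "range (\<lambda>i. A $ i) \<subseteq> {0}" unfolding row_rank_def_gen rows_eq vec.dim_eq_0 .
  have "A $ i = 0" for i using h by blast
  then show "A = 0" by (simp add: Finite_Cartesian_Product.vec_eq_iff)
qed

lemma rank1:
  assumes "rank (A::complex^'d^'d) = 1"
  shows "\<exists>a b. \<forall>i. A $ i = (a $ i) *s b"
proof -
  obtain Bs where Bs: "Bs \<subseteq> range (\<lambda>i. A$i)" "vec.independent Bs" "range (\<lambda>i. A$i) \<subseteq> vec.span Bs"
      "card Bs = vec.dim (range (\<lambda>i. A$i))"
    by (rule vec.basis_exists)
  then have "card Bs = 1" using assms unfolding row_rank_def_gen rows_eq by simp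
  then obtain b where b: "Bs = {b}" by (rule card_1_singletonE)
  have "\<forall>i. \<exists>t. A $ i = t *s b"
    using Bs(3) unfolding b vec.span_singleton by auto
  then obtain t where t: "\<And>i. A $ i = t i *s b" by metis
  show ?thesis by (rule exI[of _ "\<chi> i. t i"], rule exI[of _ b]) (simp add: t)
qed

lemma mv_smult: "(M::complex^'n^'m) *v (c *s v) = c *s (M *v v)"
  by (simp add: matrix_vector_mult_def Finite_Cartesian_Product.vec_eq_iff sum_distrib_left mult_ac)

lemma norm_smult_vec: "norm (c *s (v::complex^'n)) = cmod c * norm v"
  by (simp add: norm_vec_def L2_set_right_distrib norm_mult)

lemma mpow_eigen: "P *v v = e *s v \<Longrightarrow> mpow P j *v v = (e ^ j) *s v"
proof (induction j)
  case 0 then show ?case by simp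
next
  case (Suc j)
  have "mpow P (Suc j) *v v = P *v (mpow P j *v v)" by (simp add: mpow_Suc matrix_vector_mul_assoc)
  also have "\<dots> = (e ^ Suc j) *s v" using Suc by (simp add: mv_smult)
  finally show ?case .
qed

lemma eigen_le_norm:
  assumes "M *v v = e *s v" "v \<noteq> 0"
  shows "cmod e \<le> norm (M::complex^'d^'d)"
proof -
  have "cmod e * norm v = norm (M *v v)" using assms by (simp add: norm_smult_vec)
  also have "\<dots> \<le> norm M * norm v" by (rule norm_mv)
  finally show ?thesis using assms(2) by simp
qed

lemma spectral_radius_le_norm: "spectral_radius (M::complex^'d^'d) \<le> norm M"
proof -
  obtain c where c: "c \<in> eigenvalues M" "cmod c = spectral_radius M" using spectral_radius_mem by blast
  then obtain v where "v \<noteq> 0" "M *v v = c *s v" by (auto simp: eigenvalues_def)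
  then show ?thesis using eigen_le_norm c(2) by metis
qed

lemma spectral_radius_zero: "spectral_radius (0::complex^'d^'d) = 0"
proof -
  have "eigenvalues (0::complex^'d^'d) \<subseteq> {0}"
  proof
    fix c assume "c \<in> eigenvalues (0::complex^'d^'d)"
    then obtain v :: "complex^'d" where v: "v \<noteq> 0" "0 *v v = c *s v" by (auto simp: eigenvalues_def)
    then have "c *s v = 0" by (simp add: matrix_vector_mult_def Finite_Cartesian_Product.vec_eq_iff)
    then show "c \<in> {0}" using v(1) by (auto simp: Finite_Cartesian_Product.vec_eq_iff)
  qed
  then show ?thesis using spectral_radius_mem[of "0::complex^'d^'d"] by auto
qed

lemma rank1_sandwich:
  assumes "rank (R::complex^'d^'d) = 1"
  shows "\<exists>c. R ** Y ** R = smat c R \<and> cmod c \<le> spectral_radius (R ** Y)"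
proof -
  obtain a b where ab: "\<And>i. R $ i = (a $ i) *s b" using rank1[OF assms] by blast
  then have Rij: "R $ i $ j = a $ i * b $ j" for i j by simp
  define c where "c = (\<Sum>k\<in>UNIV. (\<Sum>l\<in>UNIV. b $ l * Y $ l $ k) * a $ k)"
  have RY: "(R ** Y) $ i $ k = a $ i * (\<Sum>l\<in>UNIV. b $ l * Y $ l $ k)" for i k
    by (simp add: matrix_matrix_mult_def Rij sum_distrib_left mult_ac)
  have 1: "R ** Y ** R = smat c R"
    by (simp add: Finite_Cartesian_Product.vec_eq_iff smat_def matrix_matrix_mult_def[of "R ** Y" R] RY Rij c_def
        sum_distrib_left sum_distrib_right mult_ac)
  have ev: "(R ** Y) *v a = c *s a"
    by (simp add: Finite_Cartesian_Product.vec_eq_iff matrix_vector_mult_def RY c_def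
        sum_distrib_left sum_distrib_right mult_ac)
  have 2: "cmod c \<le> spectral_radius (R ** Y)"
  proof (cases "a = 0")
    case True
    then have "c = 0" by (simp add: c_def)
    then show ?thesis using spectral_radius_nonneg by simp
  next
    case False
    then have "c \<in> eigenvalues (R ** Y)" using ev by (auto simp: eigenvalues_def)
    then show ?thesis by (rule spectral_radius_ge)
  qed
  from 1 2 show ?thesis by blast
qed

lemma count2:
  "count_list xs a \<ge> 2 \<Longrightarrow> \<exists>p q r. xs = p @ a # q @ a # r"
proof (induction xs)
  case Nil then show ?case by simp
next
  case (Cons x xs)
  show ?case
  proof (cases "x = a")
    case True
    then have "count_list xs a \<ge> 1" using Cons.prems by simp
    then have "a \<in> set xs" by (metis count_notin not_one_le_zero)
    then obtain q r where "xs = q @ a # r" by (meson split_list)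
    then show ?thesis using True by (intro exI[of _ "[]"] exI[of _ q] exI[of _ r]) auto
  next
    case False
    then obtain p q r where "xs = p @ a # q @ a # r" using Cons by auto
    then show ?thesis by (intro exI[of _ "x # p"] exI[of _ q] exI[of _ r]) auto
  qed
qed

lemma repeat_decomp:
  assumes "\<not> (\<forall>A\<in>set w. P A \<longrightarrow> count_list w A \<le> 1)"
  shows "\<exists>x y z R. w = x @ R # y @ R # z \<and> P R \<and> (\<forall>A\<in>set (R # y). P A \<longrightarrow> count_list (R # y) A \<le> 1)"
proof -
  define Q where "Q = (\<lambda>k. \<exists>x y z R. w = x @ R # y @ R # z \<and> P R \<and> length y = k)"
  from assms obtain A where A0: "P A" "\<not> count_list w A \<le> 1" by blast
  then have A: "P A" "count_list w A \<ge> 2" by simp_all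
  from count2[OF A(2)] obtain p q r where pqr: "w = p @ A # q @ A # r" by blast
  have "Q (length q)" unfolding Q_def
    by (rule exI[of _ p], rule exI[of _ q], rule exI[of _ r], rule exI[of _ A]) (simp add: pqr A(1))
  define m where "m = (LEAST k. Q k)"
  have "Q m" unfolding m_def by (rule LeastI) fact
  then obtain x y z R where w: "w = x @ R # y @ R # z" "P R" and ly: "length y = m"
    unfolding Q_def by blast
  have min: "length y \<le> length y'" if "w = x' @ R' # y' @ R' # z'" "P R'" for x' y' z' R'
  proof -
    have "Q (length y')" using that unfolding Q_def by blast
    then show ?thesis unfolding ly m_def by (rule Least_le)
  qed
  have "\<forall>B\<in>set (R # y). P B \<longrightarrow> count_list (R # y) B \<le> 1"
  proof (rule ccontr)
    assume "\<not> ?thesis"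
    then obtain B where B: "P B" "count_list (R # y) B \<ge> 2" by (auto simp: not_le)
    show False
    proof (cases "B = R")
      case True
      then have "count_list y R \<ge> 1" using B by simp
      then have "R \<in> set y" by (metis count_notin not_one_le_zero)
      then obtain y1 y2 where y: "y = y1 @ R # y2" by (meson split_list)
      have "w = x @ R # y1 @ R # (y2 @ R # z)" using w y by simp
      from min[OF this w(2)] show False using y by simp
    next
      case False
      then have "count_list y B \<ge> 2" using B by simp
      from count2[OF this] obtain y1 y2 y3 where y: "y = y1 @ B # y2 @ B # y3" by blast
      have "w = (x @ R # y1) @ B # y2 @ B # (y3 @ R # z)" using w y by simp
      from min[OF this B(1)] show False using y by simp
    qed
  qed
  then show ?thesis using w by blast
qed

lemma distinct_count: "(\<And>a. a \<in> set xs \<Longrightarrow> count_list xs a \<le> 1) \<Longrightarrow> distinct xs"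
proof (induction xs)
  case Nil then show ?case by simp
next
  case (Cons x xs)
  have "count_list xs x = 0" using Cons.prems[of x] by simp
  then have "x \<notin> set xs" by (simp add: count_list_0_iff)
  moreover have "distinct xs"
  proof (rule Cons.IH)
    fix a assume "a \<in> set xs"
    then show "count_list xs a \<le> 1" using Cons.prems[of a] by (auto split: if_splits)
  qed
  ultimately show ?case by simp
qed

lemma count_filter: "count_list (filter P xs) a = (if P a then count_list xs a else 0)"
  by (induction xs) auto

lemma words_bound:
  fixes B :: "complex^'d^'d"
  assumes C: "\<And>m. norm (mpow B m) \<le> C * \<mu> ^ m" and mu: "\<mu> > 0"
    and M: "\<And>A. A \<in> set w \<Longrightarrow> A \<noteq> B \<Longrightarrow> norm A \<le> M" and M0: "M \<ge> 0"
  shows "norm (mpow B m ** prod_list_mat w) * \<mu> ^ length (filter (\<lambda>A. A \<noteq> B) w)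
          \<le> C * (C * M) ^ length (filter (\<lambda>A. A \<noteq> B) w) * \<mu> ^ (m + length w)"
  using M
proof (induction w arbitrary: m)
  case Nil
  then show ?case using C[of m] by simp
next
  case (Cons A w)
  have C0: "C \<ge> 0" using order_trans[OF norm_ge_zero C[of 0]] by simp
  show ?case
  proof (cases "A = B")
    case True
    have "mpow B m ** prod_list_mat (A # w) = mpow B (Suc m) ** prod_list_mat w"
      using True by (simp add: mpow_Suc' matrix_mul_assoc)
    then show ?thesis using Cons.IH[of "Suc m"] Cons.prems True by simp
  next
    case False
    define t where "t = length (filter (\<lambda>A. A \<noteq> B) w)"
    have IH: "norm (prod_list_mat w) * \<mu> ^ t \<le> C * (C * M) ^ t * \<mu> ^ length w"
      using Cons.IH[of 0] Cons.prems unfolding t_def by simp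
    have nA: "norm A \<le> M" using Cons.prems False by simp
    have "norm (mpow B m ** prod_list_mat (A # w)) \<le> norm (mpow B m) * (norm A * norm (prod_list_mat w))"
      by (simp add: order_trans[OF norm_mm] mult_left_mono norm_mm)
    then have "norm (mpow B m ** prod_list_mat (A # w)) * \<mu> ^ Suc t
        \<le> (norm (mpow B m) * norm A) * (norm (prod_list_mat w) * \<mu> ^ t) * \<mu>"
      using mu by (simp add: mult_right_mono mult_ac)
    also have "\<dots> \<le> (C * \<mu> ^ m * M) * (C * (C * M) ^ t * \<mu> ^ length w) * \<mu>"
    proof -
      have h1: "norm (mpow B m) * norm A \<le> C * \<mu> ^ m * M"
        using C[of m] nA C0 mu by (intro mult_mono) auto
      have h2: "(norm (mpow B m) * norm A) * (norm (prod_list_mat w) * \<mu> ^ t)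
          \<le> (C * \<mu> ^ m * M) * (C * (C * M) ^ t * \<mu> ^ length w)"
        using C0 M0 mu by (intro mult_mono[OF h1 IH]) auto
      show ?thesis using mu by (intro mult_right_mono[OF h2]) auto
    qed
    also have "\<dots> = C * (C * M) ^ Suc t * \<mu> ^ (m + length (A # w))"
      by (simp add: power_add mult_ac)
    finally show ?thesis using False by (simp add: t_def)
  qed
qed


definition Wset :: "(complex^'d^'d) set \<Rightarrow> (complex^'d^'d) list set" where
  "Wset S = {ms. length ms \<ge> 1 \<and> set ms \<subseteq> S \<and> (\<forall>A\<in>S. rank A = 1 \<longrightarrow> count_list ms A \<le> 1)}"

definition fval :: "(complex^'d^'d) list \<Rightarrow> real" where
  "fval ms = root (length ms) (spectral_radius (prod_list_mat ms))"

lemma fval_nonneg: "fval ms \<ge> 0"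
  unfolding fval_def by (rule real_root_ge_zero[OF spectral_radius_nonneg])

lemma fval_pow: "length ms \<ge> 1 \<Longrightarrow> fval ms ^ length ms = spectral_radius (prod_list_mat ms)"
  unfolding fval_def by (rule real_root_pow_pos2) (auto simp: spectral_radius_nonneg)

lemma norm_prod_le:
  assumes "set u \<subseteq> S" "\<And>A. A \<in> S \<Longrightarrow> norm A \<le> G" "G \<ge> 0"
  shows "norm (prod_list_mat (u::(complex^'d^'d) list)) \<le> norm (Finite_Cartesian_Product.mat 1 :: complex^'d^'d) * G ^ length u"
  using assms(1)
proof (induction u)
  case Nil then show ?case by simp
next
  case (Cons A u)
  have "norm (prod_list_mat (A # u)) \<le> norm A * norm (prod_list_mat u)" by (simp add: norm_mm)
  also have "\<dots> \<le> G * (norm (Finite_Cartesian_Product.mat 1 :: complex^'d^'d) * G ^ length u)"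
    using Cons assms by (intro mult_mono) auto
  finally show ?case by (simp add: mult_ac)
qed

context
  fixes S :: "(complex^'d^'d) set" and B :: "complex^'d^'d"
  assumes fin: "finite S" and ne: "S \<noteq> {}" and cls: "\<And>A. A \<in> S \<Longrightarrow> A = B \<or> A = 0 \<or> rank A = 1"
    and Bs: "B \<in> S \<or> B = 0"
begin

lemma W0_bound:
  assumes "spectral_radius B < \<mu>"
  shows "\<exists>K\<ge>0. \<forall>w. set w \<subseteq> S \<longrightarrow> (\<forall>A\<in>S. rank A = 1 \<longrightarrow> count_list w A \<le> 1)
             \<longrightarrow> norm (prod_list_mat w) \<le> K * \<mu> ^ length w"
proof -
  have mu: "\<mu> > 0" using assms spectral_radius_nonneg[of B] by linarith
  obtain C where C: "\<And>m. norm (mpow B m) \<le> C * \<mu> ^ m" using gelfand_bound[OF assms] by blast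
  have C0: "C \<ge> 0" using order_trans[OF norm_ge_zero C[of 0]] by simp
  define M where "M = (\<Sum>A\<in>S. norm A)"
  have MA: "norm A \<le> M" if "A \<in> S" for A
    unfolding M_def by (rule member_le_sum[OF that]) (simp_all add: fin)
  have M0: "M \<ge> 0" unfolding M_def by (simp add: sum_nonneg)
  define D where "D = max 1 (C * M / \<mu>)"
  define K where "K = C * D ^ card S"
  have D1: "D \<ge> 1" by (simp add: D_def)
  have K0: "K \<ge> 0" using C0 D1 by (simp add: K_def)
  have "norm (prod_list_mat w) \<le> K * \<mu> ^ length w"
    if w: "set w \<subseteq> S" "\<forall>A\<in>S. rank A = 1 \<longrightarrow> count_list w A \<le> 1" for w
  proof (cases "0 \<in> set w")
    case True
    then show ?thesis using K0 mu by (simp add: prod_zero)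
  next
    case False
    define t where "t = length (filter (\<lambda>A. A \<noteq> B) w)"
    have "distinct (filter (\<lambda>A. A \<noteq> B) w)"
    proof (rule distinct_count)
      fix a assume a: "a \<in> set (filter (\<lambda>A. A \<noteq> B) w)"
      then have "a \<in> S" "a \<noteq> B" "a \<noteq> 0" using w False by auto
      then have "rank a = 1" using cls by blast
      then show "count_list (filter (\<lambda>A. A \<noteq> B) w) a \<le> 1"
        using w \<open>a \<in> S\<close> \<open>a \<noteq> B\<close> by (simp add: count_filter)
    qed
    then have "t = card (set (filter (\<lambda>A. A \<noteq> B) w))" by (metis t_def distinct_card)
    also have "\<dots> \<le> card S" using w fin by (intro card_mono) auto
    finally have tS: "t \<le> card S" .
    have wb: "norm (prod_list_mat w) * \<mu> ^ t \<le> C * (C * M) ^ t * \<mu> ^ length w"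
      using words_bound[OF C mu _ M0, of w 0] MA w unfolding t_def by auto
    have "norm (prod_list_mat w) = norm (prod_list_mat w) * \<mu> ^ t / \<mu> ^ t" using mu by simp
    also have "\<dots> \<le> C * (C * M) ^ t * \<mu> ^ length w / \<mu> ^ t"
      using mu wb by (intro divide_right_mono) auto
    also have "\<dots> = C * (C * M / \<mu>) ^ t * \<mu> ^ length w" by (simp add: power_divide)
    also have "\<dots> \<le> C * D ^ card S * \<mu> ^ length w"
    proof -
      have "(C * M / \<mu>) ^ t \<le> D ^ t"
        using C0 M0 mu by (intro power_mono) (auto simp: D_def)
      also have "\<dots> \<le> D ^ card S" using tS D1 by (rule power_increasing)
      finally show ?thesis using C0 mu by (intro mult_right_mono mult_left_mono) auto
    qed
    finally show ?thesis by (simp add: K_def)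
  qed
  then show ?thesis using K0 by blast
qed

lemma all_bound:
  assumes "spectral_radius B < L" and fl: "\<And>w. w \<in> Wset S \<Longrightarrow> fval w \<le> L"
  shows "\<exists>K\<ge>0. \<forall>w. set w \<subseteq> S \<longrightarrow> norm (prod_list_mat w) \<le> K * L ^ length w"
proof -
  obtain K where K0: "K \<ge> 0" and K: "\<And>w. set w \<subseteq> S \<Longrightarrow> (\<forall>A\<in>S. rank A = 1 \<longrightarrow> count_list w A \<le> 1)
             \<Longrightarrow> norm (prod_list_mat w) \<le> K * L ^ length w"
    using W0_bound[OF assms(1)] by blast
  have lam: "L \<ge> 0" using assms(1) spectral_radius_nonneg[of B] by linarith
  have "set w \<subseteq> S \<longrightarrow> norm (prod_list_mat w) \<le> K * L ^ length w" for w
  proof (induction w rule: length_induct)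
    case (1 w)
    show ?case
    proof
      assume wS: "set w \<subseteq> S"
      show "norm (prod_list_mat w) \<le> K * L ^ length w"
      proof (cases "\<forall>A\<in>set w. rank A = 1 \<longrightarrow> count_list w A \<le> 1")
        case True
        have "\<forall>A\<in>S. rank A = 1 \<longrightarrow> count_list w A \<le> 1"
          using True by (metis count_notin zero_le)
        then show ?thesis using K wS by blast
      next
        case False
        from repeat_decomp[OF False] obtain x y z R where
          w: "w = x @ R # y @ R # z" and R1: "rank R = 1"
          and cy: "\<forall>A\<in>set (R # y). rank A = 1 \<longrightarrow> count_list (R # y) A \<le> 1" by blast
        have RyW: "R # y \<in> Wset S"
        proof -
          have "\<forall>A\<in>S. rank A = 1 \<longrightarrow> count_list (R # y) A \<le> 1"
            using cy by (metis count_notin zero_le)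
          moreover have "set (R # y) \<subseteq> S" using wS w by auto
          ultimately show ?thesis by (simp add: Wset_def)
        qed
        have rho: "spectral_radius (prod_list_mat (R # y)) \<le> L ^ length (R # y)"
        proof -
          have "spectral_radius (prod_list_mat (R # y)) = fval (R # y) ^ length (R # y)"
            by (rule fval_pow[symmetric]) simp
          also have "\<dots> \<le> L ^ length (R # y)"
            using fl[OF RyW] fval_nonneg by (intro power_mono) auto
          finally show ?thesis .
        qed
        obtain c where c: "R ** prod_list_mat y ** R = smat c R"
          and cle: "cmod c \<le> spectral_radius (R ** prod_list_mat y)"
          using rank1_sandwich[OF R1] by blast
        have "prod_list_mat w = prod_list_mat x ** ((R ** prod_list_mat y ** R) ** prod_list_mat z)"
          by (simp add: w prod_append matrix_mul_assoc)
        also have "\<dots> = smat c (prod_list_mat (x @ R # z))"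
          by (simp add: c smat_mm_left smat_mm_right prod_append)
        finally have pw: "prod_list_mat w = smat c (prod_list_mat (x @ R # z))" .
        have IH: "norm (prod_list_mat (x @ R # z)) \<le> K * L ^ length (x @ R # z)"
        proof -
          have "length (x @ R # z) < length w" using w by simp
          moreover have "set (x @ R # z) \<subseteq> S" using wS w by auto
          ultimately show ?thesis using 1 by blast
        qed
        have "norm (prod_list_mat w) = cmod c * norm (prod_list_mat (x @ R # z))"
          by (simp add: pw norm_smat)
        also have "\<dots> \<le> L ^ length (R # y) * (K * L ^ length (x @ R # z))"
          using cle rho IH lam by (intro mult_mono) auto
        also have "\<dots> = K * L ^ length w" by (simp add: w power_add[symmetric] mult_ac add_ac)
        finally show ?thesis .
      qed
    qed
  qed
  then show ?thesis using K0 by blast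
qed

end

context
  fixes S :: "(complex^'d^'d) set" and B :: "complex^'d^'d"
  assumes fin: "finite S" and ne: "S \<noteq> {}" and cls: "\<And>A. A \<in> S \<Longrightarrow> A = B \<or> A = 0 \<or> rank A = 1"
    and Bs: "B \<in> S \<or> B = 0"
begin

lemma single_W: "A \<in> S \<Longrightarrow> [A] \<in> Wset S"
  by (simp add: Wset_def)

lemma fval_single: "fval [A] = spectral_radius A"
  by (simp add: fval_def)

lemma fB: "\<exists>w0\<in>Wset S. spectral_radius B \<le> fval w0"
proof (cases "B \<in> S")
  case True
  then show ?thesis using single_W[OF True] fval_single[of B] by force
next
  case False
  then have "B = 0" using Bs by blast
  moreover obtain A where "A \<in> S" using ne by blast
  ultimately show ?thesis using single_W fval_nonneg spectral_radius_zero by metis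
qed

lemma attain: "\<exists>w\<in>Wset S. \<forall>v\<in>Wset S. fval v \<le> fval w"
proof (cases "\<forall>v\<in>Wset S. fval v \<le> spectral_radius B")
  case True
  obtain w0 where "w0 \<in> Wset S" "spectral_radius B \<le> fval w0" using fB by blast
  then show ?thesis using True by force
next
  case False
  then obtain w1 where w1: "w1 \<in> Wset S" "spectral_radius B < fval w1" by force
  define \<mu> where "\<mu> = (spectral_radius B + fval w1) / 2"
  have mu: "spectral_radius B < \<mu>" "\<mu> < fval w1" using w1 by (auto simp: \<mu>_def)
  have mu0: "\<mu> > 0" using mu(1) spectral_radius_nonneg[of B] by linarith
  obtain K where K: "\<And>w. set w \<subseteq> S \<Longrightarrow> (\<forall>A\<in>S. rank A = 1 \<longrightarrow> count_list w A \<le> 1)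
             \<Longrightarrow> norm (prod_list_mat w) \<le> K * \<mu> ^ length w"
    using W0_bound[OF fin ne cls Bs mu(1)] by blast
  define q where "q = fval w1 / \<mu>"
  have q1: "q > 1" using mu mu0 by (simp add: q_def)
  obtain n0 where n0: "K < q ^ n0" using real_arch_pow[OF q1] by blast
  have long: "fval v < fval w1" if v: "v \<in> Wset S" "length v \<ge> n0" for v
  proof -
    have "K < q ^ length v"
      using n0 power_increasing[OF v(2), of q] q1 by linarith
    then have "K * \<mu> ^ length v < q ^ length v * \<mu> ^ length v"
      using mu0 by (intro mult_strict_right_mono) auto
    also have "\<dots> = fval w1 ^ length v" using mu0 by (simp add: q_def power_divide)
    finally have lt: "K * \<mu> ^ length v < fval w1 ^ length v" .
    have "fval v ^ length v = spectral_radius (prod_list_mat v)"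
      using v by (intro fval_pow) (simp add: Wset_def)
    also have "\<dots> \<le> norm (prod_list_mat v)" by (rule spectral_radius_le_norm)
    also have "\<dots> \<le> K * \<mu> ^ length v" using v K by (simp add: Wset_def)
    finally have "fval v ^ length v < fval w1 ^ length v" using lt by linarith
    then show ?thesis using fval_nonneg by (rule power_less_imp_less_base)
  qed
  define F where "F = {v \<in> Wset S. length v < n0}"
  have finF: "finite F"
  proof (rule finite_subset)
    show "F \<subseteq> {xs. set xs \<subseteq> S \<and> length xs \<le> n0}" by (auto simp: F_def Wset_def)
    show "finite {xs. set xs \<subseteq> S \<and> length xs \<le> n0}" by (rule finite_lists_length_le[OF fin])
  qed
  have w1F: "w1 \<in> F"
    using long[OF w1(1)] w1(1) by (force simp: F_def)
  define m where "m = Max (fval ` F)"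
  have "m \<in> fval ` F" unfolding m_def using finF w1F by (intro Max_in) auto
  then obtain w where wF: "w \<in> F" and wm: "fval w = m" by blast
  have le: "fval v \<le> fval w" if "v \<in> F" for v
    unfolding wm m_def using finF that by (intro Max_ge) auto
  have "\<forall>v\<in>Wset S. fval v \<le> fval w"
  proof
    fix v assume v: "v \<in> Wset S"
    show "fval v \<le> fval w"
    proof (cases "length v < n0")
      case True then show ?thesis using v le by (simp add: F_def)
    next
      case False
      then have "fval v < fval w1" using long[OF v] by simp
      then show ?thesis using le[OF w1F] by simp
    qed
  qed
  then show ?thesis using wF by (auto simp: F_def)
qed

lemma lower_words:
  assumes wW: "w \<in> Wset S" and r0: "fval w > 0"
  shows "\<exists>c>0. \<forall>n\<ge>1. \<exists>u. length u = n \<and> set u \<subseteq> S \<and> c * fval w ^ n \<le> norm (prod_list_mat u)"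
proof -
  define r where "r = fval w"
  define k where "k = length w"
  define P where "P = prod_list_mat w"
  have k1: "k \<ge> 1" using wW by (simp add: Wset_def k_def)
  have wS: "set w \<subseteq> S" using wW by (simp add: Wset_def)
  have rho: "spectral_radius P = r ^ k" unfolding P_def r_def k_def using k1 unfolding k_def
    by (rule fval_pow[symmetric])
  obtain e where e: "e \<in> eigenvalues P" "cmod e = spectral_radius P" using spectral_radius_mem by blast
  then obtain v where v: "v \<noteq> 0" "P *v v = e *s v" by (auto simp: eigenvalues_def)
  define G where "G = 1 + (\<Sum>A\<in>S. norm A)"
  have G1: "G \<ge> 1" unfolding G_def by (simp add: sum_nonneg)
  have GA: "norm A \<le> G" if "A \<in> S" for A
  proof -
    have "norm A \<le> (\<Sum>A\<in>S. norm A)" by (rule member_le_sum[OF that]) (simp_all add: fin)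
    then show ?thesis by (simp add: G_def)
  qed
  define N1 where "N1 = norm (Finite_Cartesian_Product.mat 1 :: complex^'d^'d)"
  have N1: "N1 > 0"
  proof -
    have "(Finite_Cartesian_Product.mat 1 :: complex^'d^'d) \<noteq> 0"
      by (auto simp: Finite_Cartesian_Product.vec_eq_iff Finite_Cartesian_Product.mat_def)
    then show ?thesis by (simp add: N1_def)
  qed
  define c where "c = min 1 (r ^ k) / (N1 * G ^ k)"
  have rpos: "r > 0" using r0 by (simp add: r_def)
  have c0: "c > 0" using rpos N1 G1 by (simp add: c_def)
  have "\<exists>u. length u = n \<and> set u \<subseteq> S \<and> c * r ^ n \<le> norm (prod_list_mat u)" if n1: "n \<ge> 1" for n
  proof -
    define j where "j = n div k"
    define s where "s = n mod k"
    have sk: "s < k" using k1 by (simp add: s_def)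
    have nj: "n = j * k + s" by (simp add: j_def s_def)
    define u where "u = concat (replicate j w) @ take s w"
    have lenc: "length (concat (replicate i w)) = i * k" for i
      by (induction i) (simp_all add: k_def)
    have lu: "length u = n" using sk nj by (simp add: u_def lenc k_def)
    have setc: "set (concat (replicate i w)) \<subseteq> S" for i
      using wS by (induction i) auto
    have su: "set u \<subseteq> S" using setc wS set_take_subset[of s w] by (auto simp: u_def)
    define T where "T = prod_list_mat (take s w)"
    define T' where "T' = prod_list_mat (drop s w)"
    have PT: "P = T ** T'" unfolding P_def T_def T'_def by (simp add: prod_append[symmetric])
    have pu: "prod_list_mat u = mpow P j ** T"
      by (simp add: u_def prod_append prod_concat_replicate P_def T_def)
    have pow: "mpow P (Suc j) = prod_list_mat u ** T'"
      by (simp add: mpow_Suc' pu PT matrix_mul_assoc)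
    have "cmod (e ^ Suc j) \<le> norm (mpow P (Suc j))"
      using mpow_eigen[OF v(2)] v(1) by (rule eigen_le_norm)
    also have "\<dots> \<le> norm (prod_list_mat u) * norm T'" unfolding pow by (rule norm_mm)
    also have "\<dots> \<le> norm (prod_list_mat u) * (N1 * G ^ k)"
    proof (rule mult_left_mono)
      have "norm T' \<le> N1 * G ^ length (drop s w)"
        unfolding T'_def N1_def using G1 GA wS set_drop_subset[of s w]
        by (intro norm_prod_le) auto
      also have "\<dots> \<le> N1 * G ^ k"
        using N1 G1 by (intro mult_left_mono power_increasing) (auto simp: k_def)
      finally show "norm T' \<le> N1 * G ^ k" .
    qed simp
    finally have up0: "cmod (e ^ Suc j) \<le> norm (prod_list_mat u) * (N1 * G ^ k)" .
    have "cmod (e ^ Suc j) = r ^ (k * Suc j)"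
      by (simp only: norm_power e(2) rho power_mult)
    with up0 have up: "r ^ (k * Suc j) \<le> norm (prod_list_mat u) * (N1 * G ^ k)" by simp
    have low: "r ^ n * min 1 (r ^ k) \<le> r ^ (k * Suc j)"
    proof (cases "r \<le> 1")
      case True
      have "r ^ n * min 1 (r ^ k) \<le> r ^ n * r ^ k" using rpos by (intro mult_left_mono) auto
      also have "\<dots> = r ^ (n + k)" by (simp add: power_add)
      also have "\<dots> \<le> r ^ (k * Suc j)"
        using True rpos nj by (intro power_decreasing) (auto simp: algebra_simps)
      finally show ?thesis .
    next
      case False
      have "r ^ n * min 1 (r ^ k) \<le> r ^ n" using rpos by (simp add: mult_left_le)
      also have "\<dots> \<le> r ^ (k * Suc j)"
        using False nj sk by (intro power_increasing) (auto simp: algebra_simps)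
      finally show ?thesis .
    qed
    have "c * r ^ n * (N1 * G ^ k) = r ^ n * min 1 (r ^ k)" using N1 G1 by (simp add: c_def)
    also have "\<dots> \<le> norm (prod_list_mat u) * (N1 * G ^ k)" using low up by linarith
    finally have "c * r ^ n \<le> norm (prod_list_mat u)"
      using N1 G1 by (simp add: mult_le_cancel_right)
    then show ?thesis using lu su by blast
  qed
  then show ?thesis using c0 unfolding r_def by blast
qed

end

context
  fixes S :: "(complex^'d^'d) set" and B :: "complex^'d^'d"
  assumes fin: "finite S" and ne: "S \<noteq> {}" and cls: "\<And>A. A \<in> S \<Longrightarrow> A = B \<or> A = 0 \<or> rank A = 1"
    and Bs: "B \<in> S \<or> B = 0"
begin

lemma jsr_eq:
  assumes wW: "w \<in> Wset S" and wmax: "\<forall>v\<in>Wset S. fval v \<le> fval w"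
  shows "joint_spectral_radius S = fval w"
proof -
  define r where "r = fval w"
  define X where "X = (\<lambda>n::nat. {root n (norm (prod_list_mat ms)) | ms. length ms = n \<and> set ms \<subseteq> S})"
  have jsr: "joint_spectral_radius S = lim (\<lambda>n. Sup (X n))"
    by (simp add: joint_spectral_radius_def X_def)
  have Xim: "X n = (\<lambda>ms. root n (norm (prod_list_mat ms))) ` {ms. set ms \<subseteq> S \<and> length ms = n}" for n
    by (auto simp: X_def)
  have Xfin: "finite (X n)" for n
    unfolding Xim by (rule finite_imageI[OF finite_lists_length_eq[OF fin]])
  obtain A0 where A0: "A0 \<in> S" using ne by blast
  have Xmem: "root n (norm (prod_list_mat ms)) \<in> X n" if "length ms = n" "set ms \<subseteq> S" for n ms
    using that by (auto simp: X_def)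
  have repS: "set (replicate n A0) \<subseteq> S" for n using A0 by (simp add: set_replicate_conv_if)
  have Xne: "X n \<noteq> {}" for n
    using Xmem[of "replicate n A0" n] repS[of n] by auto
  have Xle: "Sup (X n) \<le> b" if "\<And>ms. length ms = n \<Longrightarrow> set ms \<subseteq> S \<Longrightarrow> root n (norm (prod_list_mat ms)) \<le> b" for n b
    using Xne[of n] that by (intro cSup_least) (auto simp: X_def)
  have Xge: "root n (norm (prod_list_mat ms)) \<le> Sup (X n)" if "length ms = n" "set ms \<subseteq> S" for n ms
    using Xfin Xmem[OF that] by (rule le_cSup_finite)
  have r0: "r \<ge> 0" unfolding r_def by (rule fval_nonneg)
  have rB: "spectral_radius B \<le> r"
    using fB[OF fin ne cls Bs] wmax unfolding r_def by force
  have "(\<lambda>n. Sup (X n)) \<longlonglongrightarrow> r"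
  proof (rule order_tendstoI)
    fix a assume ra: "r < a"
    define L where "L = (r + a) / 2"
    have L: "r < L" "L < a" using ra by (auto simp: L_def)
    have L0: "L > 0" using L r0 by linarith
    obtain K where K0: "K \<ge> 0" and K: "\<And>ms. set ms \<subseteq> S \<Longrightarrow> norm (prod_list_mat ms) \<le> K * L ^ length ms"
    proof -
      have "spectral_radius B < L" using rB L by linarith
      moreover have "\<And>v. v \<in> Wset S \<Longrightarrow> fval v \<le> L" using wmax L unfolding r_def by force
      ultimately show ?thesis using all_bound[OF fin ne cls Bs] that by blast
    qed
    have "(\<lambda>n. root n (K + 1)) \<longlonglongrightarrow> 1" using K0 by (intro LIMSEQ_root_const) simp
    moreover have "1 < a / L" using L L0 by simp
    ultimately have ev1: "eventually (\<lambda>n. root n (K + 1) < a / L) sequentially"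
      by (rule order_tendstoD(2))
    have ev2: "eventually (\<lambda>n. n \<ge> 1) sequentially" by (rule eventually_ge_at_top)
    show "eventually (\<lambda>n. Sup (X n) < a) sequentially"
      using ev1 ev2
    proof eventually_elim
      case (elim n)
      have "Sup (X n) \<le> root n (K + 1) * L"
      proof (rule Xle)
        fix ms assume ms: "length ms = n" "set ms \<subseteq> S"
        have "norm (prod_list_mat ms) \<le> (K + 1) * L ^ n"
          using K[OF ms(2)] ms(1) L0 by (smt (verit) mult_right_mono zero_le_power)
        then have "root n (norm (prod_list_mat ms)) \<le> root n ((K + 1) * L ^ n)"
          using elim(2) by (intro real_root_le_mono) auto
        also have "\<dots> = root n (K + 1) * L"
          using elim(2) L0 by (simp add: real_root_mult real_root_power_cancel)
        finally show "root n (norm (prod_list_mat ms)) \<le> root n (K + 1) * L" .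
      qed
      also have "\<dots> < a / L * L" using elim(1) L0 by (intro mult_strict_right_mono) auto
      also have "\<dots> = a" using L0 by simp
      finally show ?case .
    qed
  next
    fix a assume ar: "a < r"
    have ev2: "eventually (\<lambda>n. n \<ge> 1) sequentially" by (rule eventually_ge_at_top)
    show "eventually (\<lambda>n. a < Sup (X n)) sequentially"
    proof (cases "a < 0")
      case True
      show ?thesis using ev2
      proof eventually_elim
        case (elim n)
        have "0 \<le> root n (norm (prod_list_mat (replicate n A0)))" by (simp add: real_root_ge_zero)
        also have "\<dots> \<le> Sup (X n)" using A0 by (intro Xge) auto
        finally show ?case using True by linarith
      qed
    next
      case False
      then have rpos: "fval w > 0" using ar unfolding r_def by linarith
      obtain c where c0: "c > 0" and c: "\<And>n. n \<ge> 1 \<Longrightarrow> \<exists>u. length u = n \<and> set u \<subseteq> S \<and> c * r ^ n \<le> norm (prod_list_mat u)"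
        using lower_words[OF fin ne cls Bs wW rpos] unfolding r_def by blast
      have "(\<lambda>n. root n c) \<longlonglongrightarrow> 1" using c0 by (rule LIMSEQ_root_const)
      moreover have "a / r < 1" using ar False rpos unfolding r_def by simp
      ultimately have ev1: "eventually (\<lambda>n. a / r < root n c) sequentially"
        by (rule order_tendstoD(1))
      show ?thesis using ev1 ev2
      proof eventually_elim
        case (elim n)
        obtain u where u: "length u = n" "set u \<subseteq> S" "c * r ^ n \<le> norm (prod_list_mat u)"
          using c[OF elim(2)] by blast
        have rp: "r > 0" using rpos by (simp add: r_def)
        have "a = a / r * r" using rp by simp
        also have "\<dots> < root n c * r" using elim(1) rp by (intro mult_strict_right_mono) auto
        also have "\<dots> = root n (c * r ^ n)"
          using elim(2) rp by (simp add: real_root_mult real_root_power_cancel)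
        also have "\<dots> \<le> root n (norm (prod_list_mat u))"
          using elim(2) u(3) by (intro real_root_le_mono) auto
        also have "\<dots> \<le> Sup (X n)" using u by (intro Xge) auto
        finally show ?case .
      qed
    qed
  qed
  then have "lim (\<lambda>n. Sup (X n)) = r" by (rule limI)
  then show ?thesis using jsr by (simp add: r_def)
qed

end

theorem corollary3:
  fixes S :: "(complex^'d^'d) set"
  assumes "finite S" and "S \<noteq> {}"
    and "\<forall>A\<in>S. \<forall>B\<in>S. rank A \<ge> 2 \<and> rank B \<ge> 2 \<longrightarrow> A = B"
  shows "\<exists>ms. length ms \<ge> 1 \<and> set ms \<subseteq> S
            \<and> (\<forall>A\<in>S. rank A = 1 \<longrightarrow> count_list ms A \<le> 1)
            \<and> joint_spectral_radius S = root (length ms) (spectral_radius (prod_list_mat ms))"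
proof -
  obtain B :: "complex^'d^'d" where cls: "\<And>A. A \<in> S \<Longrightarrow> A = B \<or> A = 0 \<or> rank A = 1"
    and Bs: "B \<in> S \<or> B = 0"
  proof (cases "\<exists>A\<in>S. rank A \<ge> 2")
    case True
    then obtain B where B: "B \<in> S" "rank B \<ge> 2" by blast
    have "A = B \<or> A = 0 \<or> rank A = 1" if A: "A \<in> S" for A
    proof (cases "rank A \<ge> 2")
      case True
      then show ?thesis using assms(3) B A by blast
    next
      case False
      then have "rank A = 0 \<or> rank A = 1" by linarith
      then show ?thesis using rank0 by blast
    qed
    then show ?thesis using that B by blast
  next
    case False
    have "A = 0 \<or> A = 0 \<or> rank A = 1" if A: "A \<in> S" for A
    proof -
      have "rank A = 0 \<or> rank A = 1" using False A by force
      then show ?thesis using rank0 by blast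
    qed
    then show ?thesis using that[of 0] by blast
  qed
  obtain w where w: "w \<in> Wset S" "\<forall>v\<in>Wset S. fval v \<le> fval w"
    using attain[OF assms(1,2) cls Bs] by blast
  have "joint_spectral_radius S = fval w" by (rule jsr_eq[OF assms(1,2) cls Bs w])
  then show ?thesis using w(1) by (auto simp: Wset_def fval_def)
qed

end
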